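(* Let $a_{n,k}$ be the number of matchings of size $n$ with exactly $k$ occurrences of the endhered pattern $21$, let $b_{n,k}=a_{n+1,k}$ for $n,k\ge0$, and let $$B(z,u)=\sum_{n\ge0}\sum_{k=0}^{n}b_{n,k}\frac{z^n}{n!}u^k.$$ Then $$B(z,u)=\frac{e^{z(u-1)}}{\sqrt{(1-2z)^3}}.$$ In particular, for every $k\ge0$, $[u^k]B(z,u)=\dfrac{z^k}{k!}\cdot\dfrac{e^{-z}}{\sqrt{(1-2z)^3}}$.
   Context: A matching of size $n$ is a set of $n$ arcs $(a,b)$ with $1\le a<b\le 2n$ such that each point of $\{1,\dots,2n\}$ belongs to exactly one arc. An occurrence of the endhered pattern $21$ in a matching $\mu$ is a pair of arcs of $\mu$ of the form $(i+1,j+2),(i+2,j+1)$ (two nested arcs with consecutive starting points and consecutive ending points); the number of occurrences is the number of such pairs. $[u^k]$ denotes extraction of the coefficient of $u^k$; identities are of formal power series. *)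

theory Defs
  imports "HOL-Computational_Algebra.Formal_Power_Series"
begin

definition matchings :: "nat \<Rightarrow> (nat \<times> nat) set set" where
  "matchings n = {M. M \<subseteq> {(a, b). 1 \<le> a \<and> a < b \<and> b \<le> 2 * n} \<and>
      (\<forall>p \<in> {1..2 * n}. \<exists>!e. e \<in> M \<and> (fst e = p \<or> snd e = p))}"

definition occ21 :: "(nat \<times> nat) set \<Rightarrow> nat" where
  "occ21 M = card {(i, j). (i + 1, j + 2) \<in> M \<and> (i + 2, j + 1) \<in> M}"

definition a_nk :: "nat \<Rightarrow> nat \<Rightarrow> nat" where
  "a_nk n k = card {M \<in> matchings n. occ21 M = k}"

definition b_nk :: "nat \<Rightarrow> nat \<Rightarrow> nat" where
  "b_nk n k = a_nk (Suc n) k"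

text \<open>Bivariate series are represented as power series in z whose coefficients are power series in u.\<close>
definition B_series :: "real fps fps" where
  "B_series = Abs_fps (\<lambda>n. Abs_fps (\<lambda>k. real (b_nk n k) / fact n))"

definition fps_lift :: "real fps \<Rightarrow> real fps fps" where
  "fps_lift f = Abs_fps (\<lambda>n. fps_const (fps_nth f n))"

definition exp_zu1 :: "real fps fps" where
  "exp_zu1 = Abs_fps (\<lambda>n. fps_const (1 / fact n) * (fps_X - 1) ^ n)"

definition sqrt_1m2z_cubed :: "real fps" where
  "sqrt_1m2z_cubed = fps_radical (\<lambda>k x. root k x) 2 ((1 - 2 * fps_X) ^ 3)"

end

theory Submission
  imports Defs
begin

unbundle fps_syntax


definition arcs :: "nat \<Rightarrow> (nat \<times> nat) set" where
  "arcs n = {(a, b). 1 \<le> a \<and> a < b \<and> b \<le> 2 * n}"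

definition ismatch :: "nat \<Rightarrow> (nat \<times> nat) set \<Rightarrow> bool" where
  "ismatch n M \<longleftrightarrow> M \<subseteq> arcs n \<and>
     (\<forall>a b c d. (a,b) \<in> M \<longrightarrow> (c,d) \<in> M \<longrightarrow> (a = c \<or> a = d \<or> b = c \<or> b = d) \<longrightarrow> a = c \<and> b = d) \<and>
     (\<forall>p. 1 \<le> p \<and> p \<le> 2 * n \<longrightarrow> (\<exists>a b. (a,b) \<in> M \<and> (a = p \<or> b = p)))"

lemma matchings_iff: "M \<in> matchings n \<longleftrightarrow> ismatch n M"
proof
  assume A: "M \<in> matchings n"
  hence sub: "M \<subseteq> arcs n" and U: "\<forall>p \<in> {1..2 * n}. \<exists>!e. e \<in> M \<and> (fst e = p \<or> snd e = p)"
    unfolding matchings_def arcs_def by auto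
  have D: "a = c \<and> b = d" if "(a,b) \<in> M" "(c,d) \<in> M" "a = c \<or> a = d \<or> b = c \<or> b = d" for a b c d
  proof -
    have ab: "1 \<le> a" "a < b" "b \<le> 2*n" and cd: "1 \<le> c" "c < d" "d \<le> 2*n"
      using sub that(1,2) unfolding arcs_def by auto
    from that(3) obtain p where p: "p = a \<or> p = b" "p = c \<or> p = d" by blast
    have "p \<in> {1..2*n}" using p ab cd by auto
    with U have "\<exists>!e. e \<in> M \<and> (fst e = p \<or> snd e = p)" by blast
    then have "(a,b) = (c,d)" using that(1,2) p by (metis fst_conv snd_conv)
    thus ?thesis by simp
  qed
  have C: "\<exists>a b. (a,b) \<in> M \<and> (a = p \<or> b = p)" if "1 \<le> p" "p \<le> 2*n" for p
  proof -
    have "p \<in> {1..2*n}" using that by auto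
    with U obtain e where "e \<in> M" "fst e = p \<or> snd e = p" by blast
    thus ?thesis by (metis prod.collapse)
  qed
  show "ismatch n M" unfolding ismatch_def using sub D C by blast
next
  assume "ismatch n M"
  hence sub: "M \<subseteq> arcs n" and D: "\<And>a b c d. (a,b) \<in> M \<Longrightarrow> (c,d) \<in> M \<Longrightarrow> (a = c \<or> a = d \<or> b = c \<or> b = d) \<Longrightarrow> a = c \<and> b = d"
    and C: "\<And>p. 1 \<le> p \<Longrightarrow> p \<le> 2 * n \<Longrightarrow> (\<exists>a b. (a,b) \<in> M \<and> (a = p \<or> b = p))"
    unfolding ismatch_def by blast+
  have "\<exists>!e. e \<in> M \<and> (fst e = p \<or> snd e = p)" if "p \<in> {1..2*n}" for p
  proof -
    have "1 \<le> p" "p \<le> 2*n" using that by auto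
    from C[OF this] obtain a b where ab: "(a,b) \<in> M" "a = p \<or> b = p" by blast
    show ?thesis
    proof (rule ex1I[of _ "(a,b)"])
      show "(a,b) \<in> M \<and> (fst (a,b) = p \<or> snd (a,b) = p)" using ab by simp
      fix e assume e: "e \<in> M \<and> (fst e = p \<or> snd e = p)"
      obtain c d where ecd: "e = (c,d)" by fastforce
      have "c = a \<or> c = b \<or> d = a \<or> d = b" using e ab(2) unfolding ecd by auto
      hence "c = a \<and> d = b" using D[of c d a b] e ab(1) unfolding ecd by blast
      thus "e = (a,b)" unfolding ecd by simp
    qed
  qed
  thus "M \<in> matchings n" using sub unfolding matchings_def arcs_def by auto
qed

definition dl :: "nat \<Rightarrow> nat \<Rightarrow> nat \<Rightarrow> nat" where
  "dl x y p = p - (if x < p then 1 else 0) - (if y < p then 1 else 0)"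
definition il :: "nat \<Rightarrow> nat \<Rightarrow> nat \<Rightarrow> nat" where
  "il x y q = (if q < x then q else if q + 1 < y then q + 1 else q + 2)"

definition delM :: "nat \<Rightarrow> nat \<Rightarrow> (nat \<times> nat) set \<Rightarrow> (nat \<times> nat) set" where
  "delM x y M = (\<lambda>(p,q). (dl x y p, dl x y q)) ` (M - {(x,y)})"
definition insM :: "nat \<Rightarrow> nat \<Rightarrow> (nat \<times> nat) set \<Rightarrow> (nat \<times> nat) set" where
  "insM x y M = insert (x,y) ((\<lambda>(p,q). (il x y p, il x y q)) ` M)"

lemma dl_il: "x < y \<Longrightarrow> dl x y (il x y q) = q"
  unfolding dl_def il_def by auto
lemma il_dl: "x < y \<Longrightarrow> p \<noteq> x \<Longrightarrow> p \<noteq> y \<Longrightarrow> il x y (dl x y p) = p"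
  unfolding dl_def il_def by auto
lemma il_ne: "x < y \<Longrightarrow> il x y q \<noteq> x" "x < y \<Longrightarrow> il x y q \<noteq> y"
  unfolding il_def by auto
lemma il_mono: "x < y \<Longrightarrow> p < q \<Longrightarrow> il x y p < il x y q"
  unfolding il_def by auto
lemma il_inj: "x < y \<Longrightarrow> il x y p = il x y q \<longleftrightarrow> p = q"
  unfolding il_def by auto
lemma il_ge: "q \<le> il x y q" "il x y q \<le> q + 2"
  unfolding il_def by auto
lemma dl_mono: "x < y \<Longrightarrow> p < q \<Longrightarrow> p \<noteq> x \<Longrightarrow> p \<noteq> y \<Longrightarrow> q \<noteq> x \<Longrightarrow> q \<noteq> y \<Longrightarrow> dl x y p < dl x y q"
  unfolding dl_def by auto



lemma ismatchD:
  assumes "ismatch n M"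
  shows "\<And>a b. (a,b) \<in> M \<Longrightarrow> 1 \<le> a \<and> a < b \<and> b \<le> 2*n"
    and "\<And>a b c d. (a,b) \<in> M \<Longrightarrow> (c,d) \<in> M \<Longrightarrow> (a = c \<or> a = d \<or> b = c \<or> b = d) \<Longrightarrow> a = c \<and> b = d"
    and "\<And>p. 1 \<le> p \<Longrightarrow> p \<le> 2 * n \<Longrightarrow> (\<exists>a b. (a,b) \<in> M \<and> (a = p \<or> b = p))"
  using assms unfolding ismatch_def arcs_def by blast+

lemma ismatchI:
  assumes "\<And>a b. (a,b) \<in> M \<Longrightarrow> 1 \<le> a \<and> a < b \<and> b \<le> 2*n"
    and "\<And>a b c d. (a,b) \<in> M \<Longrightarrow> (c,d) \<in> M \<Longrightarrow> (a = c \<or> a = d \<or> b = c \<or> b = d) \<Longrightarrow> a = c \<and> b = d"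
    and "\<And>p. 1 \<le> p \<Longrightarrow> p \<le> 2 * n \<Longrightarrow> (\<exists>a b. (a,b) \<in> M \<and> (a = p \<or> b = p))"
  shows "ismatch n M"
  using assms unfolding ismatch_def arcs_def by blast

lemma ismatch_oth: assumes M: "ismatch n M" and xy: "(x,y) \<in> M" and pq: "(p,q) \<in> M" "(p,q) \<noteq> (x,y)"
  shows "p \<noteq> x \<and> p \<noteq> y \<and> q \<noteq> x \<and> q \<noteq> y"
proof -
  have "p = x \<or> p = y \<or> q = x \<or> q = y \<longrightarrow> p = x \<and> q = y" using ismatchD(2)[OF M pq(1) xy] by blast
  thus ?thesis using pq(2) by blast
qed

lemma delM_match:
  assumes M: "ismatch (Suc n) M" and xy: "(x,y) \<in> M"
  shows "ismatch n (delM x y M)"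
proof (rule ismatchI)
  note R = ismatchD[OF M]
  have xy': "1 \<le> x" "x < y" "y \<le> 2 * Suc n" using R(1)[OF xy] by auto
  have oth: "p \<noteq> x \<and> p \<noteq> y \<and> q \<noteq> x \<and> q \<noteq> y" if "(p,q) \<in> M" "(p,q) \<noteq> (x,y)" for p q
    using ismatch_oth[OF M xy that] .
  fix a b assume "(a,b) \<in> delM x y M"
  then obtain p q where pq: "(p,q) \<in> M" "(p,q) \<noteq> (x,y)" "a = dl x y p" "b = dl x y q"
    unfolding delM_def by auto
  have "1 \<le> p" "p < q" "q \<le> 2 * Suc n" using R(1)[OF pq(1)] by auto
  with oth[OF pq(1,2)] xy' show "1 \<le> a \<and> a < b \<and> b \<le> 2*n" unfolding pq dl_def by auto
next
  note R = ismatchD[OF M]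
  have xy': "1 \<le> x" "x < y" "y \<le> 2 * Suc n" using R(1)[OF xy] by auto
  have oth: "p \<noteq> x \<and> p \<noteq> y \<and> q \<noteq> x \<and> q \<noteq> y" if "(p,q) \<in> M" "(p,q) \<noteq> (x,y)" for p q
    using ismatch_oth[OF M xy that] .
  fix a b c d assume ab: "(a,b) \<in> delM x y M" and cd: "(c,d) \<in> delM x y M" and sh: "a = c \<or> a = d \<or> b = c \<or> b = d"
  from ab obtain p q where pq: "(p,q) \<in> M" "(p,q) \<noteq> (x,y)" "a = dl x y p" "b = dl x y q"
    unfolding delM_def by auto
  from cd obtain r s where rs: "(r,s) \<in> M" "(r,s) \<noteq> (x,y)" "c = dl x y r" "d = dl x y s"
    unfolding delM_def by auto
  have "p = il x y a" "q = il x y b" using oth[OF pq(1,2)] il_dl[OF xy'(2)] pq(3,4) by auto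
  moreover have "r = il x y c" "s = il x y d" using oth[OF rs(1,2)] il_dl[OF xy'(2)] rs(3,4) by auto
  ultimately have "p = r \<or> p = s \<or> q = r \<or> q = s" using sh by auto
  then have "p = r \<and> q = s" using R(2)[OF pq(1) rs(1)] by blast
  thus "a = c \<and> b = d" using pq rs by simp
next
  note R = ismatchD[OF M]
  have xy': "1 \<le> x" "x < y" "y \<le> 2 * Suc n" using R(1)[OF xy] by auto
  have oth: "p \<noteq> x \<and> p \<noteq> y \<and> q \<noteq> x \<and> q \<noteq> y" if "(p,q) \<in> M" "(p,q) \<noteq> (x,y)" for p q
    using ismatch_oth[OF M xy that] .
  fix t assume t: "1 \<le> t" "t \<le> 2 * n"
  define r where "r = il x y t"
  have r: "1 \<le> r" "r \<le> 2 * Suc n" "r \<noteq> x" "r \<noteq> y" "dl x y r = t"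
    using t xy' il_ne[of x y t] dl_il[of x y t] unfolding r_def il_def by auto
  from R(3)[OF r(1,2)] obtain p q where pq: "(p,q) \<in> M" "p = r \<or> q = r" by blast
  have ne: "(p,q) \<noteq> (x,y)" using pq(2) r(3,4) by auto
  hence "(dl x y p, dl x y q) \<in> delM x y M" using pq(1) unfolding delM_def by force
  thus "\<exists>a b. (a,b) \<in> delM x y M \<and> (a = t \<or> b = t)" using pq(2) r(5) by blast
qed

lemma insM_match:
  assumes M: "ismatch n M" and xy: "1 \<le> x" "x < y" "y \<le> 2 * Suc n"
  shows "ismatch (Suc n) (insM x y M)"
proof (rule ismatchI)
  note R = ismatchD[OF M]
  fix a b assume "(a,b) \<in> insM x y M"
  then consider "(a,b) = (x,y)" | p q where "(p,q) \<in> M" "a = il x y p" "b = il x y q"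
    unfolding insM_def by auto
  then show "1 \<le> a \<and> a < b \<and> b \<le> 2*Suc n"
  proof cases
    case 1 then show ?thesis using xy by auto
  next
    case 2
    have "1 \<le> p" "p < q" "q \<le> 2 * n" using R(1)[OF 2(1)] by auto
    then show ?thesis unfolding 2 using il_ge[of p x y] il_ge[of q x y] il_ge(2)[of x y q] il_mono[OF xy(2), of p q] by auto
  qed
next
  note R = ismatchD[OF M]
  fix a b c d assume ab: "(a,b) \<in> insM x y M" and cd: "(c,d) \<in> insM x y M" and sh: "a = c \<or> a = d \<or> b = c \<or> b = d"
  have ilne: "il x y p \<noteq> x" "il x y p \<noteq> y" for p using il_ne xy(2) by auto
  from ab consider "(a,b) = (x,y)" | p q where "(p,q) \<in> M" "a = il x y p" "b = il x y q"
    unfolding insM_def by auto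
  then show "a = c \<and> b = d"
  proof cases
    case 1
    from cd consider "(c,d) = (x,y)" | r s where "(r,s) \<in> M" "c = il x y r" "d = il x y s"
      unfolding insM_def by auto
    then show ?thesis
    proof cases
      case 1 thus ?thesis using \<open>(a,b) = (x,y)\<close> by auto
    next
      case 2
      have "il x y r \<noteq> x" "il x y r \<noteq> y" "il x y s \<noteq> x" "il x y s \<noteq> y" using ilne by auto
      hence False using 2 \<open>(a,b) = (x,y)\<close> sh by auto
      thus ?thesis ..
    qed
  next
    case ab2: 2
    from cd consider "(c,d) = (x,y)" | r s where "(r,s) \<in> M" "c = il x y r" "d = il x y s"
      unfolding insM_def by auto
    then show ?thesis
    proof cases
      case 1
      have "il x y p \<noteq> x" "il x y p \<noteq> y" "il x y q \<noteq> x" "il x y q \<noteq> y" using ilne by auto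
      hence False using 1 ab2 sh by auto
      thus ?thesis ..
    next
      case 2
      have "p = r \<or> p = s \<or> q = r \<or> q = s" using sh unfolding ab2 2 il_inj[OF xy(2)] .
      hence "p = r \<and> q = s" using R(2)[OF ab2(1) 2(1)] by blast
      thus ?thesis unfolding ab2 2 by simp
    qed
  qed
next
  note R = ismatchD[OF M]
  fix t assume t: "1 \<le> t" "t \<le> 2 * Suc n"
  show "\<exists>a b. (a,b) \<in> insM x y M \<and> (a = t \<or> b = t)"
  proof (cases "t = x \<or> t = y")
    case True thus ?thesis unfolding insM_def by blast
  next
    case False
    define r where "r = dl x y t"
    have r: "1 \<le> r" "r \<le> 2 * n" "il x y r = t"
      using t xy False il_dl[of x y t] unfolding r_def dl_def by auto
    from R(3)[OF r(1,2)] obtain p q where pq: "(p,q) \<in> M" "p = r \<or> q = r" by blast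
    hence "(il x y p, il x y q) \<in> insM x y M" unfolding insM_def by force
    thus ?thesis using pq(2) r(3) by blast
  qed
qed

lemma delM_insM: "x < y \<Longrightarrow> delM x y (insM x y M) = M"
proof -
  assume xy: "x < y"
  have "insM x y M - {(x,y)} = (\<lambda>(p,q). (il x y p, il x y q)) ` M"
    unfolding insM_def using il_ne[OF xy] by auto
  hence "delM x y (insM x y M) = (\<lambda>(p,q). (dl x y p, dl x y q)) ` (\<lambda>(p,q). (il x y p, il x y q)) ` M"
    unfolding delM_def by simp
  also have "\<dots> = M" unfolding image_image using dl_il[OF xy] by (simp add: case_prod_beta')
  finally show ?thesis .
qed

lemma insM_delM: assumes M: "ismatch n M" and xy: "(x,y) \<in> M" shows "insM x y (delM x y M) = M"
proof -
  note R = ismatchD[OF M]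
  have xy': "x < y" using R(1)[OF xy] by auto
  have oth: "p \<noteq> x \<and> p \<noteq> y \<and> q \<noteq> x \<and> q \<noteq> y" if "(p,q) \<in> M" "(p,q) \<noteq> (x,y)" for p q
    using ismatch_oth[OF M xy that] .
  have eq: "(\<lambda>(p,q). (il x y p, il x y q)) ((\<lambda>(p,q). (dl x y p, dl x y q)) e) = e" if "e \<in> M - {(x,y)}" for e
  proof -
    obtain p q where e: "e = (p,q)" by fastforce
    have "p \<noteq> x \<and> p \<noteq> y \<and> q \<noteq> x \<and> q \<noteq> y" using oth that unfolding e by blast
    thus ?thesis unfolding e using il_dl[OF xy'] by simp
  qed
  have "(\<lambda>(p,q). (il x y p, il x y q)) ` delM x y M = M - {(x,y)}"
    unfolding delM_def image_image using eq by simp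
  thus ?thesis unfolding insM_def using xy by auto
qed


lemma finite_arcs: "finite (arcs n)"
proof -
  have "arcs n \<subseteq> {0..2*n} \<times> {0..2*n}" unfolding arcs_def by auto
  thus ?thesis by (rule finite_subset) auto
qed

lemma ismatch_sub: "ismatch n M \<Longrightarrow> M \<subseteq> arcs n"
  unfolding ismatch_def by blast

lemma finite_match: "ismatch n M \<Longrightarrow> finite M"
  using ismatch_sub finite_arcs finite_subset by blast

lemma finite_matchings: "finite {M. ismatch n M}"
proof -
  have "{M. ismatch n M} \<subseteq> Pow (arcs n)" using ismatch_sub by blast
  thus ?thesis using finite_arcs finite_subset by blast
qed

lemma matchings_eq: "matchings n = {M. ismatch n M}"
  using matchings_iff by blast

lemma ismatch_0: "ismatch 0 M \<longleftrightarrow> M = {}"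
proof
  assume "ismatch 0 M" thus "M = {}" using ismatchD(1) by fastforce
next
  assume "M = {}" thus "ismatch 0 M" by (intro ismatchI) auto
qed

lemma card_delM: assumes M: "ismatch (Suc n) M" and xy: "(x,y) \<in> M"
  shows "card (delM x y M) = card M - 1"
proof -
  have xy': "x < y" using ismatchD(1)[OF M xy] by auto
  have "inj_on (\<lambda>(p,q). (dl x y p, dl x y q)) (M - {(x,y)})"
  proof (rule inj_onI)
    fix e f assume e: "e \<in> M - {(x,y)}" and f: "f \<in> M - {(x,y)}"
      and eq: "(\<lambda>(p,q). (dl x y p, dl x y q)) e = (\<lambda>(p,q). (dl x y p, dl x y q)) f"
    obtain p q where epq: "e = (p,q)" by fastforce
    obtain r s where frs: "f = (r,s)" by fastforce
    have o1: "p \<noteq> x \<and> p \<noteq> y \<and> q \<noteq> x \<and> q \<noteq> y" using ismatch_oth[OF M xy] e unfolding epq by blast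
    have o2: "r \<noteq> x \<and> r \<noteq> y \<and> s \<noteq> x \<and> s \<noteq> y" using ismatch_oth[OF M xy] f unfolding frs by blast
    have "dl x y p = dl x y r" "dl x y q = dl x y s" using eq unfolding epq frs by auto
    hence "il x y (dl x y p) = il x y (dl x y r)" "il x y (dl x y q) = il x y (dl x y s)" by auto
    hence "p = r" "q = s" using il_dl[OF xy'] o1 o2 by auto
    thus "e = f" unfolding epq frs by simp
  qed
  hence "card (delM x y M) = card (M - {(x,y)})" unfolding delM_def by (rule card_image)
  thus ?thesis using xy finite_match[OF M] by simp
qed

lemma card_match: "ismatch n M \<Longrightarrow> card M = n"
proof (induction n arbitrary: M)
  case 0 thus ?case using ismatch_0 by simp
next
  case (Suc n)
  obtain a b where ab: "(a,b) \<in> M" using ismatchD(3)[OF Suc.prems, of 1] by auto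
  have "card (delM a b M) = n" using Suc.IH[OF delM_match[OF Suc.prems ab]] .
  hence "card M - 1 = n" using card_delM[OF Suc.prems ab] by simp
  moreover have "card M \<noteq> 0" using ab finite_match[OF Suc.prems] by auto
  ultimately show ?case by simp
qed

lemma card_matchings_Suc: "card {M. ismatch (Suc n) M} = (2*n+1) * card {M. ismatch n M}"
proof -
  define T where "T = {(M,y). ismatch (Suc n) M \<and> (1,y) \<in> M}"
  have "bij_betw fst T {M. ismatch (Suc n) M}"
  proof (rule bij_betw_imageI)
    show "inj_on fst T"
    proof (rule inj_onI)
      fix u v assume u: "u \<in> T" and v: "v \<in> T" and eq: "fst u = fst v"
      obtain M y where uu: "u = (M,y)" by fastforce
      obtain M' y' where vv: "v = (M',y')" by fastforce
      have "M' = M" using eq uu vv by simp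
      have "ismatch (Suc n) M" "(1,y) \<in> M" "(1,y') \<in> M" using u v unfolding uu vv T_def \<open>M' = M\<close> by auto
      hence "y = y'" using ismatchD(2) by blast
      thus "u = v" using uu vv \<open>M' = M\<close> by simp
    qed
  next
    show "fst ` T = {M. ismatch (Suc n) M}"
    proof
      show "fst ` T \<subseteq> {M. ismatch (Suc n) M}" unfolding T_def by auto
    next
      show "{M. ismatch (Suc n) M} \<subseteq> fst ` T"
      proof
        fix M assume "M \<in> {M. ismatch (Suc n) M}"
        hence M: "ismatch (Suc n) M" by simp
        obtain a b where ab: "(a,b) \<in> M" "a = 1 \<or> b = 1" using ismatchD(3)[OF M, of 1] by auto
        have "1 \<le> a" "a < b" using ismatchD(1)[OF M ab(1)] by auto
        hence "a = 1" using ab(2) by auto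
        hence "(M,b) \<in> T" unfolding T_def using M ab by simp
        thus "M \<in> fst ` T" by force
      qed
    qed
  qed
  hence c1: "card T = card {M. ismatch (Suc n) M}" by (rule bij_betw_same_card)
  have "bij_betw (\<lambda>(M,y). (y, delM 1 y M)) T ({2..2*n+2} \<times> {M. ismatch n M})"
  proof (rule bij_betw_byWitness[where f' = "\<lambda>(y,M'). (insM 1 y M', y)"])
    show "\<forall>a\<in>T. (\<lambda>(y,M'). (insM 1 y M', y)) ((\<lambda>(M,y). (y, delM 1 y M)) a) = a"
      unfolding T_def using insM_delM by auto
    show "\<forall>a\<in>{2..2*n+2} \<times> {M. ismatch n M}. (\<lambda>(M,y). (y, delM 1 y M)) ((\<lambda>(y,M'). (insM 1 y M', y)) a) = a"
      using delM_insM by auto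
    show "(\<lambda>(M,y). (y, delM 1 y M)) ` T \<subseteq> {2..2*n+2} \<times> {M. ismatch n M}"
    proof
      fix u assume "u \<in> (\<lambda>(M,y). (y, delM 1 y M)) ` T"
      then obtain M y where My: "ismatch (Suc n) M" "(1,y) \<in> M" "u = (y, delM 1 y M)" unfolding T_def by auto
      have "1 < y" "y \<le> 2 * Suc n" using ismatchD(1)[OF My(1,2)] by auto
      thus "u \<in> {2..2*n+2} \<times> {M. ismatch n M}" using delM_match[OF My(1,2)] My(3) by auto
    qed
    show "(\<lambda>(y,M'). (insM 1 y M', y)) ` ({2..2*n+2} \<times> {M. ismatch n M}) \<subseteq> T"
    proof
      fix u assume "u \<in> (\<lambda>(y,M'). (insM 1 y M', y)) ` ({2..2*n+2} \<times> {M. ismatch n M})"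
      then obtain y M' where yM: "2 \<le> y" "y \<le> 2*n+2" "ismatch n M'" "u = (insM 1 y M', y)" by auto
      have "ismatch (Suc n) (insM 1 y M')" using insM_match[OF yM(3)] yM(1,2) by auto
      moreover have "(1,y) \<in> insM 1 y M'" unfolding insM_def by simp
      ultimately show "u \<in> T" unfolding T_def yM(4) by simp
    qed
  qed
  hence "card T = card ({2..2*n+2} \<times> {M. ismatch n M})" by (rule bij_betw_same_card)
  also have "\<dots> = (2*n+1) * card {M. ismatch n M}" by (simp add: card_cartesian_product)
  finally show ?thesis using c1 by simp
qed


definition G :: "(nat \<times> nat) set \<Rightarrow> (nat \<times> nat) set" where
  "G M = {f \<in> M. (fst f + 1, snd f - 1) \<in> M}"

lemma il_succ: "x < y \<Longrightarrow> il x y s = il x y p + 1 \<Longrightarrow> s = p + 1"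
  unfolding il_def by (auto split: if_splits)

lemma il_step: "x < y \<Longrightarrow> p + 1 \<noteq> x \<Longrightarrow> p + 2 \<noteq> y \<Longrightarrow> il x y (p+1) = il x y p + 1"
  unfolding il_def by auto

lemma il_a: "a < b \<Longrightarrow> il (a+1) (b+1) a = a" and il_b: "a < b \<Longrightarrow> il (a+1) (b+1) b = b + 2"
  unfolding il_def by auto

lemma G_insM:
  assumes M: "ismatch m M'" and ab: "(a,b) \<in> M'"
  defines "x \<equiv> a + 1" and "y \<equiv> b + 1"
  defines "\<phi> \<equiv> (\<lambda>(p,q). (il x y p, il x y q))"
  shows "G (insM x y M') = \<phi> ` (G M' - {(a,b)}) \<union> {(a, b+2)} \<union> (if (a,b) \<in> G M' then {(a+1,b+1)} else {})"
    (is "?L = ?R")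
proof -
  have ab': "1 \<le> a" "a < b" using ismatchD(1)[OF M ab] by auto
  have xy: "x < y" unfolding x_def y_def using ab' by simp
  have Mdef: "insM x y M' = insert (x,y) (\<phi> ` M')" unfolding insM_def \<phi>_def ..
  have phiab: "\<phi> (a,b) = (a, b+2)" unfolding \<phi>_def x_def y_def using il_a il_b ab' by simp
  have ilne: "il x y t \<noteq> x" "il x y t \<noteq> y" for t using il_ne[OF xy] by auto
  show ?thesis
  proof (rule set_eqI, rule iffI)
    fix f assume f: "f \<in> ?L"
    hence fM: "f \<in> insM x y M'" and fin: "(fst f + 1, snd f - 1) \<in> insM x y M'" unfolding G_def by auto
    from fM consider "f = (x,y)" | p q where "(p,q) \<in> M'" "f = \<phi> (p,q)" unfolding Mdef by auto
    then show "f \<in> ?R"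
    proof cases
      case 1
      have "(a+2, b) \<in> insM x y M'" using fin unfolding 1 x_def y_def by simp
      moreover have "(a+2, b) \<noteq> (x,y)" unfolding x_def by simp
      ultimately obtain s t where st: "(s,t) \<in> M'" "il x y s = a + 2" "il x y t = b" unfolding Mdef \<phi>_def by auto
      have "s = a + 1" using st(2) ab'(2) unfolding il_def x_def y_def by (auto split: if_splits)
      moreover have "t = b - 1" using st(3) ab'(2) unfolding il_def x_def y_def by (auto split: if_splits)
      ultimately have "(a,b) \<in> G M'" using st(1) ab unfolding G_def by simp
      thus ?thesis unfolding 1 x_def y_def by simp
    next
      case 2
      show ?thesis
      proof (cases "(p,q) = (a,b)")
        case True thus ?thesis using 2 phiab by simp
      next
        case False
        have inner: "(il x y p + 1, il x y q - 1) \<in> insert (x,y) (\<phi> ` M')"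
          using fin unfolding 2 \<phi>_def Mdef by simp
        have "il x y p \<noteq> a"
        proof
          assume "il x y p = a"
          hence "p = a" unfolding il_def x_def y_def by (auto split: if_splits)
          thus False using ismatch_oth[OF M ab 2(1) False] by simp
        qed
        hence "(il x y p + 1, il x y q - 1) \<noteq> (x,y)" unfolding x_def by simp
        with inner obtain s t where st: "(s,t) \<in> M'" "il x y s = il x y p + 1" "il x y t = il x y q - 1"
          unfolding \<phi>_def by auto
        have "s = p + 1" using il_succ[OF xy st(2)] .
        moreover have "p < q" using ismatchD(1)[OF M 2(1)] by simp
        hence "il x y p < il x y q" using il_mono[OF xy] by simp
        hence "il x y q = il x y t + 1" using st(3) by simp
        hence "q = t + 1" by (rule il_succ[OF xy])
        ultimately have "(p,q) \<in> G M'" using st(1) 2(1) unfolding G_def by simp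
        thus ?thesis using 2(2) False by auto
      qed
    qed
  next
    fix f assume f: "f \<in> ?R"
    then consider "f = (a, b+2)" | p q where "(p,q) \<in> G M'" "(p,q) \<noteq> (a,b)" "f = \<phi> (p,q)"
      | "(a,b) \<in> G M'" "f = (a+1,b+1)" by (auto split: if_splits)
    then show "f \<in> ?L"
    proof cases
      case 1
      have "(a, b+2) \<in> insM x y M'" unfolding Mdef using phiab ab by force
      moreover have "(a+1, b+1) \<in> insM x y M'" unfolding insM_def x_def y_def by simp
      ultimately show ?thesis unfolding 1 G_def by simp
    next
      case 2
      have pq: "(p,q) \<in> M'" "(p+1, q-1) \<in> M'" using 2(1) unfolding G_def by auto
      have o1: "p \<noteq> a \<and> p \<noteq> b \<and> q \<noteq> a \<and> q \<noteq> b" using ismatch_oth[OF M ab pq(1) 2(2)] .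
      have "p + 1 \<noteq> b \<and> q - 1 \<noteq> a"
      proof (cases "(p+1, q-1) = (a,b)")
        case True
        thus ?thesis using ab' by simp
      next
        case False thus ?thesis using ismatch_oth[OF M ab pq(2) False] by simp
      qed
      have q1: "q \<ge> 1" using ismatchD(1)[OF M pq(1)] by simp
      have s1: "il x y (p+1) = il x y p + 1"
        using il_step[OF xy, of p] o1 \<open>p + 1 \<noteq> b \<and> q - 1 \<noteq> a\<close> unfolding x_def y_def by simp
      have s2: "il x y (q - 1 + 1) = il x y (q-1) + 1"
      proof -
        have "q - 1 + 1 \<noteq> x" "q - 1 + 2 \<noteq> y" using o1 \<open>p + 1 \<noteq> b \<and> q - 1 \<noteq> a\<close> q1 unfolding x_def y_def by auto
        thus ?thesis using il_step[OF xy, of "q-1"] by blast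
      qed
      hence s2': "il x y (q-1) = il x y q - 1" using q1 by simp
      have "\<phi> (p+1, q-1) \<in> insM x y M'" unfolding Mdef using pq(2) by blast
      hence "(il x y p + 1, il x y q - 1) \<in> insM x y M'" using s1 s2' unfolding \<phi>_def by simp
      moreover have "\<phi> (p,q) \<in> insM x y M'" unfolding Mdef using pq(1) by blast
      ultimately show ?thesis unfolding 2(3) G_def \<phi>_def by simp
    next
      case 3
      have pq: "(a+1, b-1) \<in> M'" using 3(1) unfolding G_def by simp
      have "a + 1 < b - 1" using ismatchD(1)[OF M pq] by simp
      hence "\<phi> (a+1, b-1) = (a+2, b)" unfolding \<phi>_def il_def x_def y_def by auto
      hence "(a+2, b) \<in> insM x y M'" unfolding Mdef using pq by force
      moreover have "(a+1, b+1) \<in> insM x y M'" unfolding insM_def x_def y_def by simp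
      ultimately show ?thesis unfolding 3(2) G_def by simp
    qed
  qed
qed


lemma card_G_insM:
  assumes M: "ismatch m M'" and ab: "(a,b) \<in> M'"
  shows "card (G (insM (a+1) (b+1) M')) = card (G M') + 1"
proof -
  define x where "x = a + 1"
  define y where "y = b + 1"
  define \<phi> where "\<phi> = (\<lambda>(p,q). (il x y p, il x y q))"
  have ab': "1 \<le> a" "a < b" using ismatchD(1)[OF M ab] by auto
  have xy: "x < y" unfolding x_def y_def using ab' by simp
  have eq: "G (insM x y M') = \<phi> ` (G M' - {(a,b)}) \<union> {(a, b+2)} \<union> (if (a,b) \<in> G M' then {(a+1,b+1)} else {})"
    using G_insM[OF M ab] unfolding x_def y_def \<phi>_def by simp
  have finG: "finite (G M')" using finite_match[OF M] unfolding G_def by simp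
  have inj: "inj_on \<phi> UNIV" unfolding \<phi>_def inj_on_def using il_inj[OF xy] by auto
  have phiab: "\<phi> (a,b) = (a, b+2)" unfolding \<phi>_def x_def y_def using il_a il_b ab' by simp
  have c1: "card (\<phi> ` (G M' - {(a,b)})) = card (G M' - {(a,b)})"
    using card_image inj by (metis inj_on_subset subset_UNIV)
  have n1: "(a, b+2) \<notin> \<phi> ` (G M' - {(a,b)})"
  proof
    assume "(a, b+2) \<in> \<phi> ` (G M' - {(a,b)})"
    then obtain e where "e \<in> G M' - {(a,b)}" "(a, b+2) = \<phi> e" by blast
    hence "e \<in> G M' - {(a,b)}" "\<phi> e = \<phi> (a,b)" using phiab by auto
    thus False using inj unfolding inj_on_def by blast
  qed
  have n2: "(a+1, b+1) \<notin> \<phi> ` (G M' - {(a,b)}) \<union> {(a, b+2)}"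
  proof
    assume "(a+1, b+1) \<in> \<phi> ` (G M' - {(a,b)}) \<union> {(a, b+2)}"
    then obtain p q where "(x, y) = \<phi> (p,q)" unfolding x_def y_def by auto
    hence "il x y p = x" unfolding \<phi>_def by simp
    thus False using il_ne[OF xy] by blast
  qed
  have fin1: "finite (\<phi> ` (G M' - {(a,b)}))" using finG by simp
  have c2: "card (\<phi> ` (G M' - {(a,b)}) \<union> {(a, b+2)}) = card (G M' - {(a,b)}) + 1"
    using n1 fin1 c1 by simp
  show ?thesis
  proof (cases "(a,b) \<in> G M'")
    case True
    have "card (G (insM x y M')) = card (\<phi> ` (G M' - {(a,b)}) \<union> {(a, b+2)}) + 1"
      unfolding eq using True n2 fin1 by simp
    also have "\<dots> = card (G M') + 1" using c2 True finG card_Suc_Diff1 by fastforce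
    finally show ?thesis unfolding x_def y_def .
  next
    case False
    have "card (G (insM x y M')) = card (\<phi> ` (G M' - {(a,b)}) \<union> {(a, b+2)})"
      unfolding eq using False by simp
    also have "\<dots> = card (G M') + 1" using c2 False by simp
    finally show ?thesis unfolding x_def y_def .
  qed
qed

lemma occ_eq: assumes M: "ismatch n M" shows "occ21 M = card (G M)"
proof -
  have "bij_betw (\<lambda>(i,j). (i+1, j+2)) {(i, j). (i + 1, j + 2) \<in> M \<and> (i + 2, j + 1) \<in> M} (G M)"
  proof (rule bij_betw_byWitness[where f' = "\<lambda>(p,q). (p - 1, q - 2)"])
    show "\<forall>a\<in>{(i, j). (i + 1, j + 2) \<in> M \<and> (i + 2, j + 1) \<in> M}. (\<lambda>(p,q). (p - 1, q - 2)) ((\<lambda>(i,j). (i+1, j+2)) a) = a"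
      by auto
    show "\<forall>a\<in>G M. (\<lambda>(i,j). (i+1, j+2)) ((\<lambda>(p,q). (p - 1, q - 2)) a) = a"
    proof
      fix e assume "e \<in> G M"
      then obtain p q where e: "e = (p,q)" "(p,q) \<in> M" unfolding G_def by (cases e) auto
      have "1 \<le> p" "p < q" using ismatchD(1)[OF M e(2)] by auto
      thus "(\<lambda>(i,j). (i+1, j+2)) ((\<lambda>(p,q). (p - 1, q - 2)) e) = e" unfolding e by auto
    qed
    show "(\<lambda>(i,j). (i+1, j+2)) ` {(i, j). (i + 1, j + 2) \<in> M \<and> (i + 2, j + 1) \<in> M} \<subseteq> G M"
      unfolding G_def by auto
    show "(\<lambda>(p,q). (p - 1, q - 2)) ` G M \<subseteq> {(i, j). (i + 1, j + 2) \<in> M \<and> (i + 2, j + 1) \<in> M}"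
    proof
      fix u assume "u \<in> (\<lambda>(p,q). (p - 1, q - 2)) ` G M"
      then obtain p q where pq: "(p,q) \<in> M" "(p+1, q-1) \<in> M" "u = (p-1, q-2)" unfolding G_def by auto
      have "1 \<le> p" "p < q" using ismatchD(1)[OF M pq(1)] by auto
      thus "u \<in> {(i, j). (i + 1, j + 2) \<in> M \<and> (i + 2, j + 1) \<in> M}" using pq
        by (auto simp: Suc_diff_Suc numeral_2_eq_2)
    qed
  qed
  thus ?thesis unfolding occ21_def by (rule bij_betw_same_card)
qed


definition AA :: "nat \<Rightarrow> nat \<Rightarrow> (nat \<times> nat) set set" where
  "AA n k = {M. ismatch n M \<and> card (G M) = k}"

lemma a_nk_AA: "a_nk n k = card (AA n k)"
proof -
  have "{M \<in> matchings n. occ21 M = k} = AA n k"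
    unfolding AA_def matchings_eq using occ_eq by auto
  thus ?thesis unfolding a_nk_def by simp
qed

lemma finite_AA: "finite (AA n k)"
  using finite_matchings[of n] unfolding AA_def by (rule finite_subset[rotated]) auto

lemma recur: "(k+1) * card (AA (n+2) (k+1)) = (n+1) * card (AA (n+1) k)"
proof -
  define S1 where "S1 = (SIGMA M:AA (n+2) (k+1). G M)"
  define S2 where "S2 = (SIGMA M:AA (n+1) k. M)"
  have c1: "card S1 = (k+1) * card (AA (n+2) (k+1))"
  proof -
    have "card S1 = (\<Sum>M\<in>AA (n+2) (k+1). card (G M))" unfolding S1_def
      using finite_AA finite_match unfolding AA_def G_def by (intro card_SigmaI) auto
    also have "\<dots> = (\<Sum>M\<in>AA (n+2) (k+1). k+1)" by (rule sum.cong) (auto simp: AA_def)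
    finally show ?thesis by simp
  qed
  have c2: "card S2 = (n+1) * card (AA (n+1) k)"
  proof -
    have "card S2 = (\<Sum>M\<in>AA (n+1) k. card M)" unfolding S2_def
      using finite_AA finite_match unfolding AA_def by (intro card_SigmaI) auto
    also have "\<dots> = (\<Sum>M\<in>AA (n+1) k. n+1)" by (rule sum.cong) (auto simp: AA_def card_match)
    finally show ?thesis by simp
  qed
  have "bij_betw (\<lambda>(M,(p,q)). (delM (p+1) (q-1) M, (p, q-2))) S1 S2"
  proof (rule bij_betw_byWitness[where f' = "\<lambda>(M',(a,b)). (insM (a+1) (b+1) M', (a, b+2))"])
    show "\<forall>u\<in>S1. (\<lambda>(M',(a,b)). (insM (a+1) (b+1) M', (a, b+2))) ((\<lambda>(M,(p,q)). (delM (p+1) (q-1) M, (p, q-2))) u) = u"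
    proof
      fix u assume "u \<in> S1"
      then obtain M p q where u: "u = (M,(p,q))" "ismatch (n+2) M" "(p,q) \<in> M" "(p+1,q-1) \<in> M"
        unfolding S1_def AA_def G_def by auto
      have "p + 1 < q - 1" using ismatchD(1)[OF u(2,4)] by simp
      hence "q - 2 + 1 = q - 1" "q - 2 + 2 = q" by auto
      thus "(\<lambda>(M',(a,b)). (insM (a+1) (b+1) M', (a, b+2))) ((\<lambda>(M,(p,q)). (delM (p+1) (q-1) M, (p, q-2))) u) = u"
        unfolding u(1) using insM_delM[OF u(2,4)] by simp
    qed
    show "\<forall>u\<in>S2. (\<lambda>(M,(p,q)). (delM (p+1) (q-1) M, (p, q-2))) ((\<lambda>(M',(a,b)). (insM (a+1) (b+1) M', (a, b+2))) u) = u"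
    proof
      fix u assume "u \<in> S2"
      then obtain M a b where u: "u = (M,(a,b))" "ismatch (n+1) M" "(a,b) \<in> M"
        unfolding S2_def AA_def by auto
      have "a < b" using ismatchD(1)[OF u(2,3)] by simp
      thus "(\<lambda>(M,(p,q)). (delM (p+1) (q-1) M, (p, q-2))) ((\<lambda>(M',(a,b)). (insM (a+1) (b+1) M', (a, b+2))) u) = u"
        unfolding u(1) using delM_insM[of "a+1" "b+1" M] by simp
    qed
    show "(\<lambda>(M,(p,q)). (delM (p+1) (q-1) M, (p, q-2))) ` S1 \<subseteq> S2"
    proof
      fix v assume "v \<in> (\<lambda>(M,(p,q)). (delM (p+1) (q-1) M, (p, q-2))) ` S1"
      then obtain M p q where u: "v = (delM (p+1) (q-1) M, (p, q-2))" "ismatch (n+2) M" "(p,q) \<in> M" "(p+1,q-1) \<in> M"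
         "card (G M) = k + 1"
        unfolding S1_def AA_def G_def by auto
      have lt: "p + 1 < q - 1" using ismatchD(1)[OF u(2,4)] by simp
      have m': "ismatch (n+1) (delM (p+1) (q-1) M)" using delM_match[of "n+1" M] u(2,4) by simp
      have "(dl (p+1) (q-1) p, dl (p+1) (q-1) q) \<in> delM (p+1) (q-1) M"
        unfolding delM_def using u(3) lt by force
      moreover have "dl (p+1) (q-1) p = p" "dl (p+1) (q-1) q = q - 2" unfolding dl_def using lt by auto
      ultimately have pq': "(p, q-2) \<in> delM (p+1) (q-1) M" by simp
      have "card (G (insM (p+1) (q-2+1) (delM (p+1) (q-1) M))) = card (G (delM (p+1) (q-1) M)) + 1"
        by (rule card_G_insM[OF m' pq'])
      moreover have "q - 2 + 1 = q - 1" using lt by simp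
      ultimately have "card (G (delM (p+1) (q-1) M)) = k" using insM_delM[OF u(2,4)] u(5) by simp
      thus "v \<in> S2" unfolding u(1) S2_def AA_def using m' pq' by simp
    qed
    show "(\<lambda>(M',(a,b)). (insM (a+1) (b+1) M', (a, b+2))) ` S2 \<subseteq> S1"
    proof
      fix v assume "v \<in> (\<lambda>(M',(a,b)). (insM (a+1) (b+1) M', (a, b+2))) ` S2"
      then obtain M a b where u: "v = (insM (a+1) (b+1) M, (a, b+2))" "ismatch (n+1) M" "(a,b) \<in> M"
         "card (G M) = k"
        unfolding S2_def AA_def by auto
      have ab: "1 \<le> a" "a < b" "b \<le> 2 * (n+1)" using ismatchD(1)[OF u(2,3)] by auto
      have m: "ismatch (n+2) (insM (a+1) (b+1) M)" using insM_match[OF u(2), of "a+1" "b+1"] ab by simp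
      have "card (G (insM (a+1) (b+1) M)) = k + 1" using card_G_insM[OF u(2,3)] u(4) by simp
      moreover have "(a, b+2) \<in> G (insM (a+1) (b+1) M)" using G_insM[OF u(2,3)] by simp
      ultimately show "v \<in> S1" unfolding u(1) S1_def AA_def using m by simp
    qed
  qed
  hence "card S1 = card S2" by (rule bij_betw_same_card)
  thus ?thesis using c1 c2 by simp
qed


lemma G_1: assumes M: "ismatch 1 M" shows "G M = {}"
proof -
  have "False" if "(p,q) \<in> M" "(p+1, q-1) \<in> M" for p q
    using ismatchD(1)[OF M that(1)] ismatchD(1)[OF M that(2)] by simp
  thus ?thesis unfolding G_def by force
qed

lemma b_0: "b_nk 0 k = (if k = 0 then 1 else 0)"
proof -
  have m0: "{M. ismatch 0 M} = {{}}" using ismatch_0 by auto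
  have c: "card {M. ismatch 1 M} = 1" using card_matchings_Suc[of 0] m0 by simp
  show ?thesis
  proof (cases "k = 0")
    case True
    have "AA 1 k = {M. ismatch 1 M}" unfolding AA_def using G_1 True by auto
    thus ?thesis unfolding b_nk_def a_nk_AA using c True by simp
  next
    case False
    have "AA 1 k = {}" unfolding AA_def using G_1 False by auto
    thus ?thesis unfolding b_nk_def a_nk_AA using False by simp
  qed
qed

lemma b_rec: "(k+1) * b_nk (n+1) (k+1) = (n+1) * b_nk n k"
  unfolding b_nk_def a_nk_AA using recur[of k n] by (simp add: numeral_2_eq_2)

definition dd :: "nat \<Rightarrow> nat" where "dd n = card {M. ismatch (Suc n) M}"

lemma dd_0: "dd 0 = 1"
proof -
  have m0: "{M. ismatch 0 M} = {{}}" using ismatch_0 by auto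
  thus ?thesis unfolding dd_def using card_matchings_Suc[of 0] by simp
qed

lemma dd_Suc: "dd (Suc n) = (2*n+3) * dd n"
  unfolding dd_def using card_matchings_Suc[of "Suc n"] by (simp add: algebra_simps)

lemma b_sum: "(\<Sum>k\<le>Suc n. b_nk n k) = dd n"
proof -
  have U: "(\<Union>k\<in>{..Suc n}. AA (Suc n) k) = {M. ismatch (Suc n) M}"
  proof
    show "(\<Union>k\<in>{..Suc n}. AA (Suc n) k) \<subseteq> {M. ismatch (Suc n) M}" unfolding AA_def by auto
    show "{M. ismatch (Suc n) M} \<subseteq> (\<Union>k\<in>{..Suc n}. AA (Suc n) k)"
    proof
      fix M assume "M \<in> {M. ismatch (Suc n) M}"
      hence M: "ismatch (Suc n) M" by simp
      have "card (G M) \<le> card M" using finite_match[OF M] unfolding G_def by (intro card_mono) auto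
      hence "card (G M) \<le> Suc n" using card_match[OF M] by simp
      thus "M \<in> (\<Union>k\<in>{..Suc n}. AA (Suc n) k)" unfolding AA_def using M by auto
    qed
  qed
  have "card (\<Union>k\<in>{..Suc n}. AA (Suc n) k) = (\<Sum>k\<le>Suc n. card (AA (Suc n) k))"
    by (rule card_UN_disjoint) (auto simp: finite_AA, auto simp: AA_def)
  thus ?thesis unfolding U dd_def b_nk_def a_nk_AA by simp
qed



definition DD :: "real fps" where "DD = Abs_fps (\<lambda>n. real (dd n) / fact n)"

lemma DD_ode: "(1 - fps_const 2 * fps_X) * fps_deriv DD = fps_const 3 * DD"
proof (rule fps_ext)
  fix n
  have dnext: "real (dd (Suc m)) / fact (Suc m) * real (Suc m) = (2 * real m + 3) * (real (dd m) / fact m)" for m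
  proof -
    have e1: "real (dd (Suc m)) = (2 * real m + 3) * real (dd m)" using dd_Suc[of m] by simp
    have e2: "(fact (Suc m) :: real) = real (Suc m) * fact m" by simp
    have "(fact m :: real) > 0" by simp
    thus ?thesis unfolding e1 e2 by (simp del: of_nat_Suc)
  qed
  have "((1 - fps_const 2 * fps_X) * fps_deriv DD) $ n = fps_deriv DD $ n - 2 * (fps_X * fps_deriv DD) $ n"
    by (simp add: algebra_simps)
  also have "\<dots> = 3 * (real (dd n) / fact n)"
  proof (cases n)
    case 0 thus ?thesis using dnext[of 0] by (simp add: DD_def dd_0 mult.commute)
  next
    case (Suc m)
    have "fps_deriv DD $ n = (2 * real n + 3) * (real (dd n) / fact n)"
      using dnext[of n] by (simp add: DD_def mult.commute)
    moreover have "(fps_X * fps_deriv DD) $ n = real (dd n) / fact n * real n"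
      using dnext[of m] unfolding Suc by (simp add: DD_def mult.commute)
    ultimately show ?thesis by (simp add: algebra_simps)
  qed
  finally show "((1 - fps_const 2 * fps_X) * fps_deriv DD) $ n = (fps_const 3 * DD) $ n"
    by (simp add: DD_def)
qed

lemma DD_sq: "DD^2 * (1 - fps_const 2 * fps_X)^3 = 1"
proof -
  define P where "P = 1 - fps_const (2::real) * fps_X"
  have dP: "fps_deriv P = - fps_const 2" unfolding P_def by simp
  have ode: "P * fps_deriv DD = fps_const 3 * DD" using DD_ode unfolding P_def .
  have "fps_deriv (DD^2 * P^3) = DD^2 * (fps_const 3 * P^2 * fps_deriv P) + fps_const 2 * DD * fps_deriv DD * P^3"
    by (simp add: fps_deriv_power algebra_simps)
  also have "\<dots> = DD^2 * (fps_const 3 * P^2 * (- fps_const 2)) + fps_const 2 * DD * P^2 * (P * fps_deriv DD)"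
    unfolding dP by (simp add: algebra_simps power2_eq_square power3_eq_cube)
  also have "\<dots> = 0" unfolding ode by (simp add: algebra_simps power2_eq_square fps_const_mult[symmetric] flip: fps_const_neg)
  finally have "fps_deriv (DD^2 * P^3) = 0" .
  hence "DD^2 * P^3 = fps_const ((DD^2 * P^3) $ 0)" by (simp only: fps_deriv_eq_0_iff)
  also have "(DD^2 * P^3) $ 0 = 1" unfolding P_def by (simp add: DD_def dd_0 power2_eq_square power3_eq_cube)
  finally show ?thesis unfolding P_def by simp
qed

lemma DD_inv: "inverse sqrt_1m2z_cubed = DD"
proof -
  define R where "R = sqrt_1m2z_cubed"
  have P: "(1 - 2 * fps_X :: real fps) = 1 - fps_const 2 * fps_X" by (simp add: numeral_fps_const)
  have Q0: "((1 - 2 * fps_X :: real fps)^3) $ 0 = 1" by (simp add: fps_power_zeroth numeral_fps_const)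
  have R0: "R $ 0 = 1" unfolding R_def sqrt_1m2z_cubed_def using Q0 by simp
  have "R ^ 2 = (1 - 2 * fps_X)^3" unfolding R_def sqrt_1m2z_cubed_def
    using power_radical[of "(1 - 2 * fps_X :: real fps)^3" "\<lambda>k x. root k x" 1] Q0 by (simp add: numeral_2_eq_2 power2_eq_square)
  hence "(DD * R)^2 = 1" using DD_sq unfolding P by (simp add: power_mult_distrib)
  hence "(DD * R - 1) * (DD * R + 1) = 0" by (simp add: algebra_simps power2_eq_square)
  moreover have "DD * R + 1 \<noteq> 0"
  proof
    assume "DD * R + 1 = 0"
    hence "(DD * R + 1) $ 0 = 0" by simp
    thus False using R0 by (simp add: DD_def dd_0)
  qed
  ultimately have "DD * R = 1" by simp
  hence "R * DD = 1" by (simp add: mult.commute)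
  thus ?thesis unfolding R_def by (rule fps_inverse_unique)
qed



definition cc :: "nat \<Rightarrow> real" where "cc m = real (b_nk m 0) / fact m"

lemma b_closed: "real (b_nk n k) / fact n = (if k \<le> n then cc (n - k) / fact k else 0)"
proof (induction k arbitrary: n)
  case 0 thus ?case by (simp add: cc_def)
next
  case (Suc k)
  show ?case
  proof (cases n)
    case 0 thus ?thesis using b_0 by simp
  next
    case (Suc m)
    have r: "real (k+1) * real (b_nk (m+1) (k+1)) = real (m+1) * real (b_nk m k)"
      using b_rec[of k m] by (metis of_nat_mult)
    have f1: "(fact (Suc m) :: real) = real (Suc m) * fact m" by simp
    have f2: "(fact (Suc k) :: real) = real (Suc k) * fact k" by simp
    have B: "real (b_nk (Suc m) (Suc k)) = real (Suc m) * real (b_nk m k) / real (Suc k)"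
      using r by (simp add: field_simps del: of_nat_Suc)
    have "real (b_nk (Suc m) (Suc k)) / fact (Suc m) = real (b_nk m k) / fact m / real (Suc k)"
      unfolding f1 B by (simp del: of_nat_Suc)
    also have "\<dots> = (if k \<le> m then cc (m - k) / fact k else 0) / real (Suc k)" using Suc.IH by simp
    also have "\<dots> = (if Suc k \<le> Suc m then cc (Suc m - Suc k) / fact (Suc k) else 0)"
      unfolding f2 by simp
    finally show ?thesis unfolding Suc .
  qed
qed

definition CC :: "real fps" where "CC = Abs_fps cc"

lemma EGF_k: "Abs_fps (\<lambda>n. real (b_nk n k) / fact n) = fps_const (1 / fact k) * fps_X ^ k * CC"
proof (rule fps_ext)
  fix n
  have "(fps_const (1 / fact k) * fps_X ^ k * CC) $ n = (1 / fact k) * (fps_X ^ k * CC) $ n"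
    by (simp add: mult.assoc)
  also have "\<dots> = (if k \<le> n then cc (n - k) / fact k else 0)"
    by (simp add: fps_X_power_mult_nth CC_def)
  finally show "Abs_fps (\<lambda>n. real (b_nk n k) / fact n) $ n = (fps_const (1 / fact k) * fps_X ^ k * CC) $ n"
    using b_closed by simp
qed

lemma DD_CC: "DD = fps_exp 1 * CC"
proof (rule fps_ext)
  fix n
  have "real (dd n) = (\<Sum>k\<le>Suc n. real (b_nk n k))" using b_sum[of n] by (metis of_nat_sum)
  also have "\<dots> = (\<Sum>k\<le>n. real (b_nk n k))"
  proof -
    have "real (b_nk n (Suc n)) = 0" using b_closed[of n "Suc n"] by simp
    thus ?thesis by simp
  qed
  finally have "DD $ n = (\<Sum>k\<le>n. real (b_nk n k) / fact n)" unfolding DD_def by (simp add: sum_divide_distrib)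
  also have "\<dots> = (\<Sum>k=0..n. cc (n - k) / fact k)" using b_closed by (intro sum.cong) auto
  also have "\<dots> = (fps_exp 1 * CC) $ n" by (simp add: fps_mult_nth CC_def)
  finally show "DD $ n = (fps_exp 1 * CC) $ n" .
qed

lemma CC_DD: "CC = fps_exp (-1) * DD"
proof -
  have "fps_exp (-1) * DD = fps_exp (-1 + 1) * CC" unfolding DD_CC fps_exp_add_mult by (simp add: mult.assoc)
  thus ?thesis by simp
qed

lemma part2: "Abs_fps (\<lambda>n. real (b_nk n k) / fact n)
           = fps_const (1 / fact k) * fps_X ^ k * fps_exp (-1) * inverse sqrt_1m2z_cubed"
  unfolding EGF_k CC_DD DD_inv by (simp add: mult.assoc)

lemma XM1: "((fps_X - 1) ^ i :: real fps) $ k = real (i choose k) * (-1) ^ (i - k)"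
proof (induction i arbitrary: k)
  case 0 thus ?case by simp
next
  case (Suc i)
  have "((fps_X - 1) ^ Suc i :: real fps) $ k = (fps_X * (fps_X - 1) ^ i) $ k - ((fps_X - 1) ^ i) $ k"
    by (simp add: algebra_simps)
  also have "\<dots> = real (Suc i choose k) * (-1) ^ (Suc i - k)"
  proof (cases k)
    case 0 thus ?thesis using Suc.IH by simp
  next
    case (Suc j)
    have "(fps_X * (fps_X - 1) ^ i) $ k - ((fps_X - 1) ^ i) $ k
        = real (i choose j) * (-1) ^ (i - j) - real (i choose Suc j) * (-1) ^ (i - Suc j)"
      using Suc.IH unfolding Suc by simp
    also have "\<dots> = real (i choose j) * (-1) ^ (i - j) + real (i choose Suc j) * (-1) ^ (i - j)"
    proof (cases "Suc j \<le> i")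
      case True
      hence "i - j = Suc (i - Suc j)" by simp
      thus ?thesis by simp
    next
      case False thus ?thesis by simp
    qed
    also have "\<dots> = real (Suc i choose k) * (-1) ^ (Suc i - k)" unfolding Suc by (simp add: algebra_simps)
    finally show ?thesis .
  qed
  finally show ?case .
qed

lemma part1: "B_series = exp_zu1 * fps_lift (inverse sqrt_1m2z_cubed)"
proof (rule fps_ext)
  fix n
  show "B_series $ n = (exp_zu1 * fps_lift (inverse sqrt_1m2z_cubed)) $ n"
  proof (rule fps_ext)
    fix k
    have "B_series $ n $ k = real (b_nk n k) / fact n" unfolding B_series_def by simp
    also have "\<dots> = (fps_const (1 / fact k) * fps_X ^ k * fps_exp (-1) * DD) $ n"
      using part2[of k] DD_inv by (metis fps_nth_Abs_fps)
    also have "\<dots> = (\<Sum>i=0..n. (fps_const (1 / fact k) * fps_X ^ k * fps_exp (-1)) $ i * DD $ (n - i))"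
      by (rule fps_mult_nth)
    also have "\<dots> = (\<Sum>i=0..n. (1 / fact i * ((fps_X - 1) ^ i) $ k) * DD $ (n - i))"
    proof (rule sum.cong)
      fix i assume "i \<in> {0..n}"
      have "(fps_const (1 / fact k) * fps_X ^ k * fps_exp (-1 :: real)) $ i = 1 / fact i * ((fps_X - 1) ^ i) $ k"
      proof (cases "k \<le> i")
        case True
        have "(fps_const (1 / fact k) * fps_X ^ k * fps_exp (-1 :: real)) $ i = 1 / fact k * ((-1) ^ (i - k) / fact (i - k))"
          using True by (simp add: mult.assoc fps_X_power_mult_nth)
        also have "\<dots> = 1 / fact i * (real (i choose k) * (-1) ^ (i - k))"
          using True by (simp add: binomial_fact)
        finally show ?thesis unfolding XM1 by simp
      next
        case False
        thus ?thesis by (simp add: mult.assoc fps_X_power_mult_nth XM1)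
      qed
      thus "(fps_const (1 / fact k) * fps_X ^ k * fps_exp (-1)) $ i * DD $ (n - i) = (1 / fact i * ((fps_X - 1) ^ i) $ k) * DD $ (n - i)"
        by simp
    qed simp
    also have "\<dots> = (\<Sum>i=0..n. exp_zu1 $ i * fps_lift (inverse sqrt_1m2z_cubed) $ (n - i)) $ k"
      unfolding fps_sum_nth DD_inv[symmetric] by (simp add: exp_zu1_def fps_lift_def mult.assoc)
    also have "\<dots> = (exp_zu1 * fps_lift (inverse sqrt_1m2z_cubed)) $ n $ k"
      by (simp add: fps_mult_nth)
    finally show "B_series $ n $ k = (exp_zu1 * fps_lift (inverse sqrt_1m2z_cubed)) $ n $ k" .
  qed
qed

theorem lemma4:
  shows "B_series = exp_zu1 * fps_lift (inverse sqrt_1m2z_cubed) \<and>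
    (\<forall>k. Abs_fps (\<lambda>n. real (b_nk n k) / fact n)
           = fps_const (1 / fact k) * fps_X ^ k * fps_exp (-1) * inverse sqrt_1m2z_cubed)"
  using part1 part2 by blast


end
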